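(* Let $m,n\ge 2$. The Hadamard product of two $m$th order $n$-dimensional strong Hankel tensors is a strong Hankel tensor.
   Context: An $m$th order $n$-dimensional real tensor $\mathcal{A}=(a_{i_1\cdots i_m})$ is a Hankel tensor if there is $v=(v_0,\dots,v_{(n-1)m})^\top\in\mathbb{R}^{(n-1)m+1}$ with $a_{i_1\cdots i_m}=v_{i_1+\cdots+i_m-m}$ for all $i_j\in\{1,\dots,n\}$. Let $N=\lceil((n-1)m+2)/2\rceil$. An associated Hankel matrix of $\mathcal{A}$ is the $N\times N$ matrix with $(i,j)$ entry $v_{i+j-2}$, where, if $(n-1)m$ is odd, $v_{2\lceil(n-1)m/2\rceil}$ is an additional (arbitrary) real number. $\mathcal{A}$ is a strong Hankel tensor if an associated Hankel matrix of it is positive semi-definite. The Hadamard product of $\mathcal{A}=(a_{i_1\cdots i_m})$ and $\mathcal{B}=(b_{i_1\cdots i_m})$ is $\mathcal{A}\circ\mathcal{B}=(a_{i_1\cdots i_m}b_{i_1\cdots i_m})$. *)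

theory Defs
  imports Complex_Main "HOL-Library.FuncSet"
begin

text \<open>An m-th order n-dimensional real tensor is represented as a function on index
  tuples \<open>i :: nat \<Rightarrow> nat\<close>; the relevant tuples are those with \<open>i j \<in> {1..n}\<close> for
  \<open>j < m\<close> (the index positions 1..m of the paper are 0..m-1 here), and \<open>i j = 0\<close>
  otherwise (extensional functions), so that only the entries on the valid index set matter.\<close>

definition tensor_indices :: "nat \<Rightarrow> nat \<Rightarrow> (nat \<Rightarrow> nat) set" where
  "tensor_indices m n = ({0..<m} \<rightarrow>\<^sub>E {1..n})"

definition hankel_gen :: "nat \<Rightarrow> nat \<Rightarrow> ((nat \<Rightarrow> nat) \<Rightarrow> real) \<Rightarrow> (nat \<Rightarrow> real) \<Rightarrow> bool" where
  "hankel_gen m n A v \<longleftrightarrow>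
     (\<forall>i\<in>tensor_indices m n. A i = v ((\<Sum>j<m. i j) - m))"

definition is_hankel_tensor :: "nat \<Rightarrow> nat \<Rightarrow> ((nat \<Rightarrow> nat) \<Rightarrow> real) \<Rightarrow> bool" where
  "is_hankel_tensor m n A \<longleftrightarrow> (\<exists>v. hankel_gen m n A v)"

definition hankel_size :: "nat \<Rightarrow> nat \<Rightarrow> nat" where
  "hankel_size m n = nat \<lceil>(real ((n - 1) * m) + 2) / 2\<rceil>"

definition psd_matrix :: "nat \<Rightarrow> (nat \<Rightarrow> nat \<Rightarrow> real) \<Rightarrow> bool" where
  "psd_matrix N M \<longleftrightarrow> (\<forall>i<N. \<forall>j<N. M i j = M j i) \<and>
     (\<forall>x :: nat \<Rightarrow> real. 0 \<le> (\<Sum>i<N. \<Sum>j<N. x i * M i j * x j))"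

text \<open>If (n-1)m is odd,
  the last entry v_{(n-1)m+1} is the additional arbitrary number; since v is an arbitrary
  function nat \<Rightarrow> real, that value is free.\<close>
definition assoc_hankel_matrix :: "(nat \<Rightarrow> real) \<Rightarrow> nat \<Rightarrow> nat \<Rightarrow> real" where
  "assoc_hankel_matrix v i j = v (i + j)"

definition is_strong_hankel_tensor :: "nat \<Rightarrow> nat \<Rightarrow> ((nat \<Rightarrow> nat) \<Rightarrow> real) \<Rightarrow> bool" where
  "is_strong_hankel_tensor m n A \<longleftrightarrow>
     (\<exists>v. hankel_gen m n A v \<and> psd_matrix (hankel_size m n) (assoc_hankel_matrix v))"

definition hadamard_tensor :: "((nat \<Rightarrow> nat) \<Rightarrow> real) \<Rightarrow> ((nat \<Rightarrow> nat) \<Rightarrow> real) \<Rightarrow> (nat \<Rightarrow> nat) \<Rightarrow> real" where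
  "hadamard_tensor A B i = A i * B i"

end

theory Submission
  imports Defs
begin
definition QF :: "nat \<Rightarrow> (nat \<Rightarrow> nat \<Rightarrow> real) \<Rightarrow> (nat \<Rightarrow> real) \<Rightarrow> real" where
  "QF N M x = (\<Sum>i<N. \<Sum>j<N. x i * M i j * x j)"

lemma QF_shift:
  assumes sym: "\<forall>i<N. \<forall>j<N. M i j = M j i" and p: "p < N"
  shows "QF N M (\<lambda>i. x i + (if i = p then t else 0))
       = QF N M x + 2 * t * (\<Sum>j<N. M p j * x j) + t^2 * M p p"
proof -
  have e: "(x i + (if i = p then t else 0)) * M i j * (x j + (if j = p then t else 0))
      = x i * M i j * x j + (if i = p then t * M p j * x j else 0)
        + (if j = p then x i * M i p * t else 0)
        + (if i = p \<and> j = p then t * t * M p p else 0)" for i j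
    by (auto simp: algebra_simps)
  have s2: "(\<Sum>i<N. x i * M i p) = (\<Sum>j<N. M p j * x j)"
    using sym p by (intro sum.cong) (auto simp: mult.commute)
  have a1: "(\<Sum>i<N. \<Sum>j<N. (if i = p then t * M p j * x j else 0)) = t * (\<Sum>j<N. M p j * x j)"
  proof -
    have "(\<Sum>i<N. \<Sum>j<N. (if i = p then t * M p j * x j else 0))
        = (\<Sum>i<N. if i = p then (\<Sum>j<N. t * M p j * x j) else 0)"
      by (intro sum.cong) auto
    also have "\<dots> = (\<Sum>j<N. t * M p j * x j)" using p by (simp only: sum.delta finite_lessThan) simp
    finally show ?thesis by (simp add: sum_distrib_left mult.assoc)
  qed
  have a2: "(\<Sum>i<N. \<Sum>j<N. (if j = p then x i * M i p * t else 0)) = t * (\<Sum>i<N. x i * M i p)"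
  proof -
    have "(\<Sum>i<N. \<Sum>j<N. (if j = p then x i * M i p * t else 0)) = (\<Sum>i<N. x i * M i p * t)"
      using p by (intro sum.cong) (simp_all only: sum.delta finite_lessThan, simp)
    then show ?thesis by (simp add: sum_distrib_left mult.commute mult.left_commute)
  qed
  have a3: "(\<Sum>i<N. \<Sum>j<N. (if i = p \<and> j = p then t * t * M p p else 0)) = t * t * M p p"
  proof -
    have "(\<Sum>i<N. \<Sum>j<N. (if i = p \<and> j = p then t * t * M p p else 0))
        = (\<Sum>i<N. if i = p then t * t * M p p else 0)"
      using p by (intro sum.cong) (auto simp: sum.delta)
    also have "\<dots> = t * t * M p p" using p by (simp add: sum.delta)
    finally show ?thesis .
  qed
  have "QF N M (\<lambda>i. x i + (if i = p then t else 0))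
     = (\<Sum>i<N. \<Sum>j<N. x i * M i j * x j) + (\<Sum>i<N. \<Sum>j<N. (if i = p then t * M p j * x j else 0))
       + (\<Sum>i<N. \<Sum>j<N. (if j = p then x i * M i p * t else 0))
       + (\<Sum>i<N. \<Sum>j<N. (if i = p \<and> j = p then t * t * M p p else 0))"
    unfolding QF_def e by (simp only: sum.distrib)
  also have "\<dots> = QF N M x + t * (\<Sum>j<N. M p j * x j) + t * (\<Sum>i<N. x i * M i p) + t*t*M p p"
    unfolding a1 a2 a3 QF_def ..
  also have "\<dots> = QF N M x + 2 * t * (\<Sum>j<N. M p j * x j) + t^2 * M p p"
    using s2 by (simp add: power2_eq_square algebra_simps)
  finally show ?thesis .
qed
lemma schur_aux:
  assumes "finite S"
  shows "S \<subseteq> {..<N} \<Longrightarrow> (\<forall>i<N. \<forall>j<N. M i j = M j i) \<Longrightarrow> (\<forall>x. 0 \<le> QF N M x)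
    \<Longrightarrow> (\<forall>i<N. \<forall>j<N. (i \<notin> S \<or> j \<notin> S) \<longrightarrow> M i j = 0)
    \<Longrightarrow> (\<forall>y. 0 \<le> QF N P y)
    \<Longrightarrow> 0 \<le> QF N (\<lambda>i j. M i j * P i j) x"
  using assms
proof (induction S arbitrary: M rule: finite_induct)
  case empty
  then have "QF N (\<lambda>i j. M i j * P i j) x = 0" by (simp add: QF_def)
  then show ?case by simp
next
  case (insert p F)
  have p: "p < N" using insert by auto
  have symM: "\<forall>i<N. \<forall>j<N. M i j = M j i" by fact
  have sh: "0 \<le> QF N M y + 2 * t * (\<Sum>j<N. M p j * y j) + t^2 * M p p" for y t
    using QF_shift[OF symM p, of y t] insert.prems(3) by (metis (no_types, lifting))
  have Mpp: "M p p \<ge> 0"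
    using sh[of "\<lambda>_. 0" 1] by (simp add: QF_def)
  show ?case
  proof (cases "M p p = 0")
    case True
    have row: "M p j = 0" if j: "j < N" for j
    proof (rule ccontr)
      assume ne: "M p j \<noteq> 0"
      define y where "y = (\<lambda>i. if i = j then (1::real) else 0)"
      have c: "(\<Sum>k<N. M p k * y k) = M p j" using j by (simp add: y_def if_distrib[of "(*) _"] sum.delta cong: if_cong)
      define t where "t = - (QF N M y + 1) / (2 * M p j)"
      have "0 \<le> QF N M y + 2 * t * M p j" using sh[of y t] c True by simp
      moreover have "2 * t * M p j = - (QF N M y + 1)" using ne by (simp add: t_def)
      ultimately show False by simp
    qed
    have "\<forall>i<N. \<forall>j<N. (i \<notin> F \<or> j \<notin> F) \<longrightarrow> M i j = 0"
    proof (intro allI impI)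
      fix i j assume ij: "i < N" "j < N" "i \<notin> F \<or> j \<notin> F"
      show "M i j = 0"
      proof (cases "i = p \<or> j = p")
        case True
        then show ?thesis
        proof
          assume "i = p" then show ?thesis using row ij by simp
        next
          assume "j = p" then have "M i j = M j i" using symM ij by blast
          then show ?thesis using row ij \<open>j = p\<close> by simp
        qed
      next
        case False then show ?thesis using insert.prems(4) ij by auto
      qed
    qed
    moreover have "F \<subseteq> {..<N}" using insert.prems(1) by auto
    ultimately show ?thesis using insert.IH[OF _ symM insert.prems(3) _ insert.prems(5)] by blast
  next
    case False
    then have pos: "M p p > 0" using Mpp by simp
    define M' where "M' = (\<lambda>i j. M i j - M i p * M p j / M p p)"
    have symM': "\<forall>i<N. \<forall>j<N. M' i j = M' j i"
    proof (intro allI impI)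
      fix i j assume ij: "i < N" "j < N"
      have "M i j = M j i" "M i p = M p i" "M p j = M j p" using symM ij p by auto
      then show "M' i j = M' j i" unfolding M'_def by simp
    qed
    have QM': "QF N M' y = QF N M y - (\<Sum>j<N. M p j * y j)^2 / M p p" for y
    proof -
      have "QF N M' y = QF N M y - (\<Sum>i<N. \<Sum>j<N. (y i * M i p) * (M p j * y j)) / M p p"
      proof -
        have tm: "y i * M' i j * y j = y i * M i j * y j - (y i * M i p) * (M p j * y j) / M p p" for i j
          unfolding M'_def by (simp add: algebra_simps)
        show ?thesis unfolding QF_def tm by (simp only: sum_subtractf sum_divide_distrib)
      qed
      also have "(\<Sum>i<N. \<Sum>j<N. (y i * M i p) * (M p j * y j)) = (\<Sum>i<N. y i * M i p) * (\<Sum>j<N. M p j * y j)"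
        by (simp add: sum_product)
      also have "(\<Sum>i<N. y i * M i p) = (\<Sum>j<N. M p j * y j)"
        using symM p by (intro sum.cong) (auto simp: mult.commute)
      finally show ?thesis by (simp add: power2_eq_square)
    qed
    have psdM': "\<forall>y. 0 \<le> QF N M' y"
    proof
      fix y
      define c where "c = (\<Sum>j<N. M p j * y j)"
      have "0 \<le> QF N M y + 2 * (- c / M p p) * c + (- c / M p p)^2 * M p p"
        using sh[of y "- c / M p p"] unfolding c_def by simp
      also have "\<dots> = QF N M y - c^2 / M p p"
        using pos by (simp add: power2_eq_square field_simps)
      finally show "0 \<le> QF N M' y" using QM' c_def by simp
    qed
    have suppM': "\<forall>i<N. \<forall>j<N. (i \<notin> F \<or> j \<notin> F) \<longrightarrow> M' i j = 0"
    proof (intro allI impI)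
      fix i j assume ij: "i < N" "j < N" "i \<notin> F \<or> j \<notin> F"
      show "M' i j = 0"
      proof (cases "i = p")
        case True then show ?thesis using pos by (simp add: M'_def)
      next
        case ip: False
        show ?thesis
        proof (cases "j = p")
          case True then show ?thesis using pos symM ij p by (simp add: M'_def)
        next
          case False
          then have "i \<notin> insert p F \<or> j \<notin> insert p F" using ij ip by auto
          then have "M i j = 0" "M i p = 0 \<or> M p j = 0"
            using insert.prems(4) ij p by auto
          then show ?thesis by (auto simp: M'_def)
        qed
      qed
    qed
    have IH: "0 \<le> QF N (\<lambda>i j. M' i j * P i j) x"
      using insert.IH[OF _ symM' psdM' suppM' insert.prems(5)] insert.prems(1) by blast
    have R: "0 \<le> QF N P (\<lambda>i. x i * M i p) / M p p"
      using insert.prems(5) pos by simp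
    have "QF N (\<lambda>i j. M i j * P i j) x
        = QF N (\<lambda>i j. M' i j * P i j) x + QF N P (\<lambda>i. x i * M i p) / M p p"
    proof -
      have "QF N (\<lambda>i j. M i j * P i j) x - QF N (\<lambda>i j. M' i j * P i j) x
         = (\<Sum>i<N. \<Sum>j<N. x i * (M i p * M p j / M p p * P i j) * x j)"
      proof -
        have tm: "x i * (M i j * P i j) * x j - x i * (M' i j * P i j) * x j
           = x i * (M i p * M p j / M p p * P i j) * x j" for i j
          unfolding M'_def by (simp add: algebra_simps)
        show ?thesis unfolding QF_def tm[symmetric] by (simp only: sum_subtractf)
      qed
      also have "\<dots> = (\<Sum>i<N. \<Sum>j<N. x i * M i p * P i j * (x j * M j p)) / M p p"
        unfolding sum_divide_distrib
        using symM p by (intro sum.cong refl) (auto simp: algebra_simps)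
      finally show ?thesis unfolding QF_def by simp
    qed
    then show ?thesis using IH R by simp
  qed
qed

lemma schur:
  assumes "psd_matrix N M" "psd_matrix N P"
  shows "psd_matrix N (\<lambda>i j. M i j * P i j)"
proof -
  have "0 \<le> QF N (\<lambda>i j. M i j * P i j) x" for x
    using schur_aux[of "{..<N}" N M P x] assms unfolding psd_matrix_def QF_def by auto
  then show ?thesis using assms unfolding psd_matrix_def QF_def by auto
qed

theorem proposition2:
  fixes m n :: nat and A B :: "(nat \<Rightarrow> nat) \<Rightarrow> real"
  assumes "m \<ge> 2" and "n \<ge> 2"
    and "is_strong_hankel_tensor m n A"
    and "is_strong_hankel_tensor m n B"
  shows "is_strong_hankel_tensor m n (hadamard_tensor A B)"
proof -
  obtain v where v: "hankel_gen m n A v" "psd_matrix (hankel_size m n) (assoc_hankel_matrix v)"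
    using assms(3) unfolding is_strong_hankel_tensor_def by blast
  obtain u where u: "hankel_gen m n B u" "psd_matrix (hankel_size m n) (assoc_hankel_matrix u)"
    using assms(4) unfolding is_strong_hankel_tensor_def by blast
  have "hankel_gen m n (hadamard_tensor A B) (\<lambda>k. v k * u k)"
    using v(1) u(1) unfolding hankel_gen_def hadamard_tensor_def by auto
  moreover have "psd_matrix (hankel_size m n) (assoc_hankel_matrix (\<lambda>k. v k * u k))"
    using schur[OF v(2) u(2)] unfolding assoc_hankel_matrix_def by simp
  ultimately show ?thesis unfolding is_strong_hankel_tensor_def by blast
qed

end
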